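(* There exists a continuous non-negative function $f$ on $[0,1)$ with $f(0)=0$ such that the following holds for every $n$. Let $0\le \mathcal{K}<1$ and let $\gamma:[a,b]\to\mathbb{H}^n$ be a unit speed path whose geodesic curvature satisfies $\kappa_\gamma(t)\le\mathcal{K}$ for all $t\in[a,b]$. Then $\gamma$ is a $\frac{1}{\sqrt{1-\mathcal{K}^2}}$-quasi-geodesic, and if $g_\gamma$ is the geodesic segment joining $\gamma(a)$ and $\gamma(b)$, then the Hausdorff distance between the image of $\gamma$ and the image of $g_\gamma$ is at most $f(\mathcal{K})$.
   Context: For a unit speed path $\gamma$ in a Riemannian manifold, the geodesic curvature is $\kappa_\gamma(t)=\big\|\frac{D\dot\gamma}{dt}(t)\big\|$, where $\frac{D}{dt}$ is the covariant derivative along $\gamma$. A map $\gamma:I\to X$ from an interval to a metric space is a $k$-quasi-geodesic if $\frac1k|s-t|\le d(\gamma(s),\gamma(t))\le k|s-t|$ for all $s,t\in I$. *)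

theory Defs
  imports "HOL-Analysis.Analysis"
begin

text \<open>Points of the ambient Minkowski
space R^{1,n} are functions nat => real with coordinates 0..n (coordinate 0 is
the time-like one) and all coordinates > n equal to zero.\<close>

definition mink :: "nat \<Rightarrow> (nat \<Rightarrow> real) \<Rightarrow> (nat \<Rightarrow> real) \<Rightarrow> real" where
  "mink n x y = - x 0 * y 0 + (\<Sum>i\<in>{1..n}. x i * y i)"

definition hyp_pt :: "nat \<Rightarrow> (nat \<Rightarrow> real) \<Rightarrow> bool" where
  "hyp_pt n x \<longleftrightarrow> (\<forall>i>n. x i = 0) \<and> mink n x x = -1 \<and> x 0 > 0"

definition hdist :: "nat \<Rightarrow> (nat \<Rightarrow> real) \<Rightarrow> (nat \<Rightarrow> real) \<Rightarrow> real" where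
  "hdist n x y = arcosh (- mink n x y)"

text \<open>Orthogonal projection (w.r.t. the Minkowski form) of an ambient vector w onto
the tangent space T_p H^n = {v. mink n v p = 0}; the Levi-Civita covariant
derivative of a vector field along a curve in H^n is the tangential projection of
the ambient derivative.\<close>
definition tang_proj :: "nat \<Rightarrow> (nat \<Rightarrow> real) \<Rightarrow> (nat \<Rightarrow> real) \<Rightarrow> (nat \<Rightarrow> real)" where
  "tang_proj n p w = (\<lambda>i. w i + mink n w p * p i)"

definition tnorm :: "nat \<Rightarrow> (nat \<Rightarrow> real) \<Rightarrow> real" where
  "tnorm n v = sqrt (mink n v v)"

definition geod_curv :: "nat \<Rightarrow> (real \<Rightarrow> nat \<Rightarrow> real) \<Rightarrow> (real \<Rightarrow> nat \<Rightarrow> real) \<Rightarrow> real \<Rightarrow> real" where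
  "geod_curv n \<gamma> \<gamma>'' t = tnorm n (tang_proj n (\<gamma> t) (\<gamma>'' t))"

definition quasi_geodesic :: "('a \<Rightarrow> 'a \<Rightarrow> real) \<Rightarrow> real \<Rightarrow> real set \<Rightarrow> (real \<Rightarrow> 'a) \<Rightarrow> bool" where
  "quasi_geodesic d k I \<gamma> \<longleftrightarrow>
     (\<forall>s\<in>I. \<forall>t\<in>I. (1/k) * \<bar>s - t\<bar> \<le> d (\<gamma> s) (\<gamma> t) \<and> d (\<gamma> s) (\<gamma> t) \<le> k * \<bar>s - t\<bar>)"

definition hyp_geodesic_segment :: "nat \<Rightarrow> (nat \<Rightarrow> real) \<Rightarrow> (nat \<Rightarrow> real) \<Rightarrow> (real \<Rightarrow> nat \<Rightarrow> real) \<Rightarrow> bool" where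
  "hyp_geodesic_segment n x y g \<longleftrightarrow>
     g 0 = x \<and> g (hdist n x y) = y \<and> (\<forall>s\<in>{0..hdist n x y}. hyp_pt n (g s)) \<and>
     (\<forall>s\<in>{0..hdist n x y}. \<forall>t\<in>{0..hdist n x y}. hdist n (g s) (g t) = \<bar>s - t\<bar>)"

definition hausdorff_dist_wrt :: "('a \<Rightarrow> 'a \<Rightarrow> real) \<Rightarrow> 'a set \<Rightarrow> 'a set \<Rightarrow> real" where
  "hausdorff_dist_wrt d A B =
     max (SUP p\<in>A. INF q\<in>B. d p q) (SUP q\<in>B. INF p\<in>A. d p q)"

end

theory Submission
  imports Defs "HOL-Analysis.Analysis"
begin

lemma mink_sym: "mink n x y = mink n y x"
  unfolding mink_def by (simp add: mult.commute)

lemma mink_add_left[simp]: "mink n (\<lambda>i. f i + g i) z = mink n f z + mink n g z"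
  unfolding mink_def by (simp add: sum.distrib algebra_simps)
lemma mink_diff_left[simp]: "mink n (\<lambda>i. f i - g i) z = mink n f z - mink n g z"
  unfolding mink_def by (simp add: sum_subtractf algebra_simps)
lemma mink_scale_left[simp]: "mink n (\<lambda>i. c * f i) z = c * mink n f z"
  unfolding mink_def by (simp add: sum_distrib_left algebra_simps)
lemma mink_scale_left'[simp]: "mink n (\<lambda>i. f i * c) z = c * mink n f z"
  unfolding mink_def by (simp add: sum_distrib_left algebra_simps)
lemma mink_scale_right'[simp]: "mink n z (\<lambda>i. f i * c) = c * mink n z f"
  unfolding mink_def by (simp add: sum_distrib_left algebra_simps)
lemma mink_div_left[simp]: "mink n (\<lambda>i. f i / c) z = mink n f z / c"
  unfolding mink_def by (simp add: sum_divide_distrib[symmetric] add_divide_distrib diff_divide_distrib)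
lemma mink_add_right[simp]: "mink n z (\<lambda>i. f i + g i) = mink n z f + mink n z g"
  unfolding mink_def by (simp add: sum.distrib algebra_simps)
lemma mink_diff_right[simp]: "mink n z (\<lambda>i. f i - g i) = mink n z f - mink n z g"
  unfolding mink_def by (simp add: sum_subtractf algebra_simps)
lemma mink_scale_right[simp]: "mink n z (\<lambda>i. c * f i) = c * mink n z f"
  unfolding mink_def by (simp add: sum_distrib_left algebra_simps)
lemma mink_div_right[simp]: "mink n z (\<lambda>i. f i / c) = mink n z f / c"
  unfolding mink_def by (simp add: sum_divide_distrib[symmetric] add_divide_distrib diff_divide_distrib)

lemma mink_psd:
  assumes q: "mink n q q = -1" and vq: "mink n v q = 0"
  shows "mink n v v \<ge> 0"
proof -
  define Sv where "Sv = (\<Sum>i\<in>{1..n}. (v i)\<^sup>2)"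
  define Sq where "Sq = (\<Sum>i\<in>{1..n}. (q i)\<^sup>2)"
  have e1: "v 0 * q 0 = (\<Sum>i\<in>{1..n}. v i * q i)" using vq unfolding mink_def by simp
  have e2: "(q 0)\<^sup>2 = 1 + Sq" using q unfolding mink_def Sq_def by (simp add: power2_eq_square)
  have cs: "(\<Sum>i\<in>{1..n}. v i * q i)\<^sup>2 \<le> Sv * Sq" unfolding Sv_def Sq_def by (rule Cauchy_Schwarz_ineq_sum)
  have Sq0: "Sq \<ge> 0" unfolding Sq_def by (simp add: sum_nonneg)
  have Sv0: "Sv \<ge> 0" unfolding Sv_def by (simp add: sum_nonneg)
  have "(v 0)\<^sup>2 * (1 + Sq) \<le> Sv * Sq" using cs e1 e2 by (metis power_mult_distrib)
  hence "(v 0)\<^sup>2 * (1 + Sq) \<le> Sv * (1 + Sq)" using Sv0 by (smt (verit) mult_left_mono)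
  hence "(v 0)\<^sup>2 \<le> Sv" using Sq0 by (smt (verit) mult_right_le_imp_le)
  moreover have "mink n v v = Sv - (v 0)\<^sup>2" unfolding mink_def Sv_def by (simp add: power2_eq_square)
  ultimately show ?thesis by simp
qed

lemma quad_discr:
  fixes A B C :: real
  assumes "\<And>l. A + 2 * B * l + C * l\<^sup>2 \<ge> 0" "C \<ge> 0"
  shows "B\<^sup>2 \<le> A * C"
proof (cases "C = 0")
  case True
  show ?thesis
  proof (rule ccontr)
    assume "\<not> ?thesis"
    hence "B \<noteq> 0" using True assms(1)[of 0] by simp
    have "A + 2 * B * (-(A+1)/(2*B)) + C * (-(A+1)/(2*B))\<^sup>2 \<ge> 0" by (rule assms(1))
    with True \<open>B \<noteq> 0\<close> show False by (simp add: field_simps)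
  qed
next
  case False
  hence C: "C > 0" using assms(2) by simp
  have "A + 2 * B * (-B/C) + C * (-B/C)\<^sup>2 \<ge> 0" by (rule assms(1))
  hence "A - B\<^sup>2 / C \<ge> 0" using C by (simp add: field_simps power2_eq_square)
  thus ?thesis using C by (simp add: field_simps)
qed

lemma mink_cs:
  assumes q: "mink n q q = -1" and vq: "mink n v q = 0" and wq: "mink n w q = 0"
  shows "(mink n v w)\<^sup>2 \<le> mink n v v * mink n w w"
proof -
  have "\<And>l. mink n v v + 2 * mink n v w * l + mink n w w * l\<^sup>2 \<ge> 0"
  proof -
    fix l :: real
    have "mink n (\<lambda>i. v i + l * w i) q = 0" using vq wq by simp
    from mink_psd[OF q this] show "mink n v v + 2 * mink n v w * l + mink n w w * l\<^sup>2 \<ge> 0"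
      by (simp add: mink_sym[of n w v] algebra_simps power2_eq_square)
  qed
  from quad_discr[OF this mink_psd[OF q wq]] show ?thesis .
qed

lemma key_ineq:
  assumes q: "mink n q q = -1" and qv: "mink n q v = 0" and vv: "mink n v v = 1"
    and Tq: "mink n T q = 0" and Tv: "mink n T v = 0" and TT: "mink n T T \<le> K\<^sup>2"
  shows "(mink n p T)\<^sup>2 \<le> K\<^sup>2 * (mink n p p + (mink n p q)\<^sup>2 - (mink n p v)\<^sup>2)"
    and "0 \<le> mink n p p + (mink n p q)\<^sup>2 - (mink n p v)\<^sup>2"
proof -
  define w where "w = (\<lambda>i. p i + mink n p q * q i - mink n p v * v i)"
  have vq: "mink n v q = 0" using qv mink_sym by metis
  have qT: "mink n q T = 0" "mink n v T = 0" using Tq Tv mink_sym by metis+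
  have wq: "mink n w q = 0" unfolding w_def using q vq by simp
  have wT: "mink n w T = mink n p T" unfolding w_def using qT by simp
  have ww: "mink n w w = mink n p p + (mink n p q)\<^sup>2 - (mink n p v)\<^sup>2"
    unfolding w_def using q qv vq vv
    by (simp add: mink_sym[of n q p] mink_sym[of n v p] power2_eq_square algebra_simps)
  have w0: "mink n w w \<ge> 0" by (rule mink_psd[OF q wq])
  have T0: "mink n T T \<ge> 0" by (rule mink_psd[OF q Tq])
  have "(mink n w T)\<^sup>2 \<le> mink n w w * mink n T T" by (rule mink_cs[OF q wq Tq])
  also have "\<dots> \<le> mink n w w * K\<^sup>2" using w0 TT by (rule mult_left_mono[rotated])
  finally show "(mink n p T)\<^sup>2 \<le> K\<^sup>2 * (mink n p p + (mink n p q)\<^sup>2 - (mink n p v)\<^sup>2)"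
    using wT ww by (simp add: mult.commute)
  show "0 \<le> mink n p p + (mink n p q)\<^sup>2 - (mink n p v)\<^sup>2" using w0 ww by simp
qed


lemma rev_cs:
  assumes x: "hyp_pt n x" and y: "hyp_pt n y"
  shows "- mink n x y \<ge> 1"
proof -
  define Sx where "Sx = (\<Sum>i\<in>{1..n}. (x i)\<^sup>2)"
  define Sy where "Sy = (\<Sum>i\<in>{1..n}. (y i)\<^sup>2)"
  define P where "P = (\<Sum>i\<in>{1..n}. x i * y i)"
  have x0: "x 0 > 0" and y0: "y 0 > 0" using x y unfolding hyp_pt_def by auto
  have ex: "(x 0)\<^sup>2 = 1 + Sx" using x unfolding hyp_pt_def mink_def Sx_def by (simp add: power2_eq_square)
  have ey: "(y 0)\<^sup>2 = 1 + Sy" using y unfolding hyp_pt_def mink_def Sy_def by (simp add: power2_eq_square)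
  have cs: "P\<^sup>2 \<le> Sx * Sy" unfolding Sx_def Sy_def P_def by (rule Cauchy_Schwarz_ineq_sum)
  have Sx0: "Sx \<ge> 0" unfolding Sx_def by (simp add: sum_nonneg)
  have Sy0: "Sy \<ge> 0" unfolding Sy_def by (simp add: sum_nonneg)
  have "1\<^sup>2 \<le> (x 0)\<^sup>2" using ex Sx0 by simp
  hence "\<bar>1\<bar> \<le> \<bar>x 0\<bar>" by (simp only: abs_le_square_iff)
  hence x1: "x 0 \<ge> 1" using x0 by simp
  have "1\<^sup>2 \<le> (y 0)\<^sup>2" using ey Sy0 by simp
  hence "\<bar>1\<bar> \<le> \<bar>y 0\<bar>" by (simp only: abs_le_square_iff)
  hence y1: "y 0 \<ge> 1" using y0 by simp
  have xy1: "x 0 * y 0 \<ge> 1" using mult_mono[OF x1 y1] x0 by simp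
  have "Sx * Sy \<le> (x 0 * y 0 - 1)\<^sup>2"
  proof -
    have e: "Sx = (x 0)\<^sup>2 - 1" "Sy = (y 0)\<^sup>2 - 1" using ex ey by simp_all
    have "(x 0 * y 0 - 1)\<^sup>2 - ((x 0)\<^sup>2 - 1) * ((y 0)\<^sup>2 - 1) = (x 0 - y 0)\<^sup>2"
      by (simp add: power2_eq_square algebra_simps)
    hence "(x 0 * y 0 - 1)\<^sup>2 - Sx * Sy = (x 0 - y 0)\<^sup>2" unfolding e .
    moreover have "(x 0 - y 0)\<^sup>2 \<ge> 0" by simp
    ultimately show ?thesis by linarith
  qed
  hence "P\<^sup>2 \<le> (x 0 * y 0 - 1)\<^sup>2" using cs by linarith
  hence "\<bar>P\<bar> \<le> \<bar>x 0 * y 0 - 1\<bar>" by (simp only: abs_le_square_iff)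
  hence "\<bar>P\<bar> \<le> x 0 * y 0 - 1" using xy1 by simp
  moreover have "mink n x y = - x 0 * y 0 + P" unfolding mink_def P_def by simp
  ultimately show ?thesis by linarith
qed


lemma deriv_mink:
  assumes dX: "\<And>i. ((\<lambda>s. X s i) has_real_derivative X' i) (at t within S)"
    and dY: "\<And>i. ((\<lambda>s. Y s i) has_real_derivative Y' i) (at t within S)"
  shows "((\<lambda>s. mink n (X s) (Y s)) has_real_derivative (mink n X' (Y t) + mink n (X t) Y')) (at t within S)"
proof -
  have m: "((\<lambda>s. X s i * Y s i) has_real_derivative X' i * Y t i + X t i * Y' i) (at t within S)" for i
    using DERIV_mult[OF dX[of i] dY[of i]] by (simp add: mult.commute)
  have m0: "((\<lambda>s. - X s 0 * Y s 0) has_real_derivative - (X' 0 * Y t 0 + X t 0 * Y' 0)) (at t within S)"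
    using DERIV_minus[OF m[of 0]] by simp
  have "((\<lambda>s. - X s 0 * Y s 0 + (\<Sum>i\<in>{1..n}. X s i * Y s i)) has_real_derivative
     (- (X' 0 * Y t 0 + X t 0 * Y' 0) + (\<Sum>i\<in>{1..n}. X' i * Y t i + X t i * Y' i))) (at t within S)"
    by (intro DERIV_add m0 DERIV_sum m)
  thus ?thesis unfolding mink_def by (simp add: sum.distrib algebra_simps)
qed

lemma deriv_mink_const:
  assumes dY: "\<And>i. ((\<lambda>s. Y s i) has_real_derivative Y' i) (at t within S)"
  shows "((\<lambda>s. mink n p (Y s)) has_real_derivative (mink n p Y')) (at t within S)"
  using deriv_mink[of "\<lambda>s. p" "\<lambda>i. 0" t S Y Y' n] dY
  by (simp add: mink_def)

lemma deriv_unique_Icc: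
  fixes f :: "real \<Rightarrow> real"
  assumes "a < b" "t \<in> {a..b}"
    "(f has_real_derivative d1) (at t within {a..b})"
    "(f has_real_derivative d2) (at t within {a..b})"
  shows "d1 = d2"
  using vector_derivative_unique_within_closed_interval[of a b t f d1 d2] assms
  by (simp add: has_real_derivative_iff_has_vector_derivative)

lemma deriv_const_on:
  fixes f :: "real \<Rightarrow> real"
  assumes "a < b" "t \<in> {a..b}" "\<forall>s\<in>{a..b}. f s = c"
    "(f has_real_derivative d) (at t within {a..b})"
  shows "d = 0"
proof -
  have "((\<lambda>s. c) has_real_derivative 0) (at t within {a..b})" by simp
  hence "(f has_real_derivative 0) (at t within {a..b})"
    by (rule has_field_derivative_transform_within[of _ _ _ _ 1]) (use assms in auto)
  from deriv_unique_Icc[OF assms(1,2) assms(4) this] show ?thesis .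
qed


locale curve =
  fixes n :: nat and K a b :: real and \<gamma> \<gamma>' \<gamma>'' :: "real \<Rightarrow> nat \<Rightarrow> real"
  assumes K0: "0 \<le> K" and K1: "K < 1" and ab: "a < b"
    and hyp: "\<forall>t\<in>{a..b}. hyp_pt n (\<gamma> t)"
    and d1: "\<forall>t\<in>{a..b}. \<forall>i. ((\<lambda>s. \<gamma> s i) has_real_derivative \<gamma>' t i) (at t within {a..b})"
    and d2: "\<forall>t\<in>{a..b}. \<forall>i. ((\<lambda>s. \<gamma>' s i) has_real_derivative \<gamma>'' t i) (at t within {a..b})"
    and unit: "\<forall>t\<in>{a..b}. mink n (\<gamma>' t) (\<gamma>' t) = 1"
    and curv: "\<forall>t\<in>{a..b}. geod_curv n \<gamma> \<gamma>'' t \<le> K"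
begin

lemma gg: "t \<in> {a..b} \<Longrightarrow> mink n (\<gamma> t) (\<gamma> t) = -1"
  using hyp unfolding hyp_pt_def by auto

lemma rel1: assumes t: "t \<in> {a..b}" shows "mink n (\<gamma> t) (\<gamma>' t) = 0"
proof -
  have "((\<lambda>s. mink n (\<gamma> s) (\<gamma> s)) has_real_derivative (mink n (\<gamma>' t) (\<gamma> t) + mink n (\<gamma> t) (\<gamma>' t))) (at t within {a..b})"
    using d1 t by (intro deriv_mink) auto
  from deriv_const_on[OF ab t _ this] gg have "mink n (\<gamma>' t) (\<gamma> t) + mink n (\<gamma> t) (\<gamma>' t) = 0" by blast
  thus ?thesis by (simp add: mink_sym[of n "\<gamma>' t"])
qed

lemma rel2: assumes t: "t \<in> {a..b}" shows "mink n (\<gamma>'' t) (\<gamma>' t) = 0"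
proof -
  have "((\<lambda>s. mink n (\<gamma>' s) (\<gamma>' s)) has_real_derivative (mink n (\<gamma>'' t) (\<gamma>' t) + mink n (\<gamma>' t) (\<gamma>'' t))) (at t within {a..b})"
    using d2 t by (intro deriv_mink) auto
  from deriv_const_on[OF ab t _ this] unit have "mink n (\<gamma>'' t) (\<gamma>' t) + mink n (\<gamma>' t) (\<gamma>'' t) = 0" by blast
  thus ?thesis by (simp add: mink_sym[of n "\<gamma>' t"])
qed

lemma rel3: assumes t: "t \<in> {a..b}" shows "mink n (\<gamma>'' t) (\<gamma> t) = -1"
proof -
  have "((\<lambda>s. mink n (\<gamma> s) (\<gamma>' s)) has_real_derivative (mink n (\<gamma>' t) (\<gamma>' t) + mink n (\<gamma> t) (\<gamma>'' t))) (at t within {a..b})"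
    using d1 d2 t by (intro deriv_mink) auto
  from deriv_const_on[OF ab t _ this] rel1 have "mink n (\<gamma>' t) (\<gamma>' t) + mink n (\<gamma> t) (\<gamma>'' t) = 0" by blast
  thus ?thesis using unit t by (simp add: mink_sym[of n "\<gamma> t"])
qed

definition T where "T t = (\<lambda>i. \<gamma>'' t i - \<gamma> t i)"

lemma T_props: assumes t: "t \<in> {a..b}"
  shows "mink n (T t) (\<gamma> t) = 0" "mink n (T t) (\<gamma>' t) = 0" "mink n (T t) (T t) \<le> K\<^sup>2"
proof -
  show T1: "mink n (T t) (\<gamma> t) = 0" unfolding T_def using rel3[OF t] gg[OF t] by simp
  show "mink n (T t) (\<gamma>' t) = 0" unfolding T_def using rel2[OF t] rel1[OF t] by simp
  have tp: "tang_proj n (\<gamma> t) (\<gamma>'' t) = T t"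
    unfolding tang_proj_def T_def using rel3[OF t] by simp
  have "sqrt (mink n (T t) (T t)) \<le> K" using curv[rule_format, OF t] unfolding geod_curv_def tnorm_def tp .
  moreover have "mink n (T t) (T t) \<ge> 0" by (rule mink_psd[OF gg[OF t] T1])
  ultimately show "mink n (T t) (T t) \<le> K\<^sup>2"
    using power_mono[of "sqrt (mink n (T t) (T t))" K 2] by simp
qed

lemma phi_props:
  assumes t: "t \<in> {a..b}"
  shows "((\<lambda>s. mink n p (\<gamma> s)) has_real_derivative mink n p (\<gamma>' t)) (at t within {a..b})"
    and "((\<lambda>s. mink n p (\<gamma>' s)) has_real_derivative mink n p (\<gamma>'' t)) (at t within {a..b})"
    and "(mink n p (\<gamma>'' t) - mink n p (\<gamma> t))\<^sup>2 \<le> K\<^sup>2 * (mink n p p + (mink n p (\<gamma> t))\<^sup>2 - (mink n p (\<gamma>' t))\<^sup>2)"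
    and "0 \<le> mink n p p + (mink n p (\<gamma> t))\<^sup>2 - (mink n p (\<gamma>' t))\<^sup>2"
proof -
  show "((\<lambda>s. mink n p (\<gamma> s)) has_real_derivative mink n p (\<gamma>' t)) (at t within {a..b})"
    using d1 t by (intro deriv_mink_const) auto
  show "((\<lambda>s. mink n p (\<gamma>' s)) has_real_derivative mink n p (\<gamma>'' t)) (at t within {a..b})"
    using d2 t by (intro deriv_mink_const) auto
  have e: "mink n p (\<gamma>'' t) - mink n p (\<gamma> t) = mink n p (T t)" unfolding T_def by simp
  have qv: "mink n (\<gamma> t) (\<gamma>' t) = 0" by (rule rel1[OF t])
  note TP = T_props[OF t]
  show "(mink n p (\<gamma>'' t) - mink n p (\<gamma> t))\<^sup>2 \<le> K\<^sup>2 * (mink n p p + (mink n p (\<gamma> t))\<^sup>2 - (mink n p (\<gamma>' t))\<^sup>2)"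
    unfolding e by (rule key_ineq(1)[OF gg[OF t] qv unit[rule_format, OF t] TP])
  show "0 \<le> mink n p p + (mink n p (\<gamma> t))\<^sup>2 - (mink n p (\<gamma>' t))\<^sup>2"
    by (rule key_ineq(2)[OF gg[OF t] qv unit[rule_format, OF t] TP])
qed

end

lemma barrier:
  fixes F :: "real \<Rightarrow> real"
  assumes sb: "s \<le> b" and cont: "continuous_on {s..b} F" and Fs: "F s > 0"
    and touch: "\<And>t. s < t \<Longrightarrow> t \<le> b \<Longrightarrow> (\<forall>\<tau>\<in>{s..<t}. F \<tau> > 0) \<Longrightarrow> F t = 0 \<Longrightarrow> False"
  shows "\<forall>t\<in>{s..b}. F t > 0"
proof
  fix t1 assume t1: "t1 \<in> {s..b}"
  show "F t1 > 0"
  proof (rule ccontr)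
    assume "\<not> F t1 > 0"
    hence Ft1: "F t1 \<le> 0" by simp
    define Z where "Z = {s..t1} \<inter> F -` {..0}"
    have c1: "continuous_on {s..t1} F" using t1 by (intro continuous_on_subset[OF cont]) auto
    have clZ: "closed Z" unfolding Z_def by (rule continuous_closed_preimage[OF c1]) auto
    have t1Z: "t1 \<in> Z" using t1 Ft1 unfolding Z_def by auto
    have bdd: "bdd_below Z" unfolding Z_def by (rule bdd_belowI[of _ s]) auto
    define t0 where "t0 = Inf Z"
    have t0Z: "t0 \<in> Z" unfolding t0_def using closed_contains_Inf[OF _ bdd clZ] t1Z by auto
    have low: "\<And>x. x \<in> Z \<Longrightarrow> t0 \<le> x" unfolding t0_def using bdd by (simp add: cInf_lower)
    have t0s: "s \<le> t0" "t0 \<le> t1" "F t0 \<le> 0" using t0Z unfolding Z_def by auto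
    have "t0 \<noteq> s" using Fs t0s by auto
    hence st0: "s < t0" using t0s by simp
    have c0: "continuous_on {s..t0} F" using t0s by (intro continuous_on_subset[OF c1]) auto
    obtain x where x: "s \<le> x" "x \<le> t0" "F x = 0" using IVT2'[of F t0 0 s, OF t0s(3) _ _ c0] Fs st0 by auto
    have "x \<in> Z" using x t0s unfolding Z_def by auto
    hence "x = t0" using low x by force
    hence F0: "F t0 = 0" using x by simp
    have pos: "\<forall>\<tau>\<in>{s..<t0}. F \<tau> > 0"
    proof
      fix \<tau> assume tau: "\<tau> \<in> {s..<t0}"
      show "F \<tau> > 0"
      proof (rule ccontr)
        assume "\<not> F \<tau> > 0"
        hence "\<tau> \<in> Z" using tau t0s unfolding Z_def by auto
        thus False using low tau by force
      qed
    qed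
    show False using touch[OF st0 _ pos F0] t0s t1 by auto
  qed
qed

lemma touch:
  fixes F :: "real \<Rightarrow> real"
  assumes der: "(F has_real_derivative d) (at t within {a..b})" and d: "d > 0"
    and "a \<le> s" "s < t" "t \<le> b" and pos: "\<forall>\<tau>\<in>{s..<t}. F \<tau> > 0" and F0: "F t = 0"
  shows False
proof -
  obtain e where e: "e > 0" "\<And>h. h > 0 \<Longrightarrow> t - h \<in> {a..b} \<Longrightarrow> h < e \<Longrightarrow> F (t - h) < F t"
    using has_real_derivative_pos_inc_left[OF der d] by blast
  define h where "h = min e (t - s) / 2"
  have h: "h > 0" "h < e" "h \<le> t - s" using e assms unfolding h_def by auto
  have "F (t - h) < 0" using e(2)[OF h(1) _ h(2)] h assms by auto
  moreover have "F (t - h) > 0" using pos h by auto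
  ultimately show False by simp
qed

lemma maxprin:
  fixes \<phi> \<phi>' \<phi>'' :: "real \<Rightarrow> real"
  assumes ab: "a < b" and K0: "0 \<le> K" and K1: "K < 1"
    and d1: "\<forall>t\<in>{a..b}. (\<phi> has_real_derivative \<phi>' t) (at t within {a..b})"
    and d2: "\<forall>t\<in>{a..b}. (\<phi>' has_real_derivative \<phi>'' t) (at t within {a..b})"
    and ineq: "\<forall>t\<in>{a..b}. (\<phi>'' t - \<phi> t)\<^sup>2 \<le> K\<^sup>2 * (1 + (\<phi> t)\<^sup>2 - (\<phi>' t)\<^sup>2)"
    and pa: "\<phi> a \<le> 0" and pb: "\<phi> b \<le> 0"
  shows "\<forall>t\<in>{a..b}. \<phi> t \<le> K / sqrt (1 - K\<^sup>2)"
proof -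
  have cont: "continuous_on {a..b} \<phi>" using d1 by (intro DERIV_continuous_on) auto
  obtain t0 where t0: "t0 \<in> {a..b}" and mx: "\<forall>y\<in>{a..b}. \<phi> y \<le> \<phi> t0"
    using continuous_attains_sup[OF compact_Icc _ cont] ab by auto
  define M where "M = \<phi> t0"
  have c: "sqrt (1 - K\<^sup>2) > 0" using K0 K1 by (simp add: power2_less_1_iff abs_less_iff)
  have Kc: "K / sqrt (1 - K\<^sup>2) \<ge> 0" using K0 c by simp
  show ?thesis
  proof (cases "M \<le> 0")
    case True
    thus ?thesis using mx Kc unfolding M_def by force
  next
    case False
    hence M0: "M > 0" by simp
    have at0: "a < t0" "t0 < b" using M0 pa pb t0 unfolding M_def by (auto simp: le_less)
    have atw: "\<And>x. a < x \<Longrightarrow> x < b \<Longrightarrow> at x within {a..b} = at x" by (rule at_within_Icc_at)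
    have D1: "DERIV \<phi> x :> \<phi>' x" if "a < x" "x < b" for x
      using d1[rule_format, of x] atw[OF that] that by simp
    have D2: "DERIV \<phi>' x :> \<phi>'' x" if "a < x" "x < b" for x
      using d2[rule_format, of x] atw[OF that] that by simp
    have p1: "\<phi>' t0 = 0"
    proof (rule DERIV_local_max[OF D1[OF at0]])
      show "0 < min (t0 - a) (b - t0)" using at0 by simp
      show "\<forall>y. \<bar>t0 - y\<bar> < min (t0 - a) (b - t0) \<longrightarrow> \<phi> y \<le> \<phi> t0"
        using mx by (auto simp: abs_less_iff)
    qed
    have p2: "\<phi>'' t0 \<le> 0"
    proof (rule ccontr)
      assume "\<not> \<phi>'' t0 \<le> 0"
      then obtain e where e: "e > 0" "\<And>h. h > 0 \<Longrightarrow> h < e \<Longrightarrow> \<phi>' t0 < \<phi>' (t0 + h)"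
        using DERIV_pos_inc_right[OF D2[OF at0]] by auto
      obtain m where m: "m > 0" "m \<le> e" "m \<le> b - t0" using e at0 by (intro that[of "min e (b - t0)"]) auto
      define t1 where "t1 = t0 + m / 2"
      have t1: "t0 < t1" "t1 < b" "t1 - t0 < e" unfolding t1_def using m by linarith+
      have "\<phi> t0 < \<phi> t1"
      proof (rule DERIV_pos_imp_increasing_open[OF t1(1)])
        fix x assume x: "t0 < x" "x < t1"
        have "\<phi>' t0 < \<phi>' (t0 + (x - t0))" using e(2)[of "x - t0"] x t1 by auto
        thus "\<exists>y. DERIV \<phi> x :> y \<and> 0 < y" using D1[of x] x at0 t1 p1 by auto
      next
        show "continuous_on {t0..t1} \<phi>" using at0 t1 by (intro continuous_on_subset[OF cont]) auto
      qed
      moreover have "\<phi> t1 \<le> \<phi> t0" using mx t1 at0 by auto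
      ultimately show False by simp
    qed
    have "M\<^sup>2 \<le> (\<phi>'' t0 - \<phi> t0)\<^sup>2"
    proof -
      have "M \<le> \<phi> t0 - \<phi>'' t0" using p2 unfolding M_def by simp
      hence "M\<^sup>2 \<le> (\<phi> t0 - \<phi>'' t0)\<^sup>2" using M0 by (intro power_mono) auto
      thus ?thesis by (simp add: power2_commute)
    qed
    also have "\<dots> \<le> K\<^sup>2 * (1 + M\<^sup>2)" using ineq[rule_format, OF t0] p1 unfolding M_def by simp
    finally have "M\<^sup>2 * (1 - K\<^sup>2) \<le> K\<^sup>2" by (simp add: algebra_simps)
    hence "(M * sqrt (1 - K\<^sup>2))\<^sup>2 \<le> K\<^sup>2" using c by (simp add: power_mult_distrib)
    hence "M * sqrt (1 - K\<^sup>2) \<le> K" using K0 by (rule power2_le_imp_le)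
    hence "M \<le> K / sqrt (1 - K\<^sup>2)" using c by (simp add: pos_le_divide_eq)
    thus ?thesis using mx unfolding M_def by force
  qed
qed


lemma sqrt_cosh: "E \<ge> 0 \<Longrightarrow> sqrt ((cosh E)\<^sup>2 - 1) = sinh (E::real)"
  by (simp add: sinh_square_eq[symmetric])

lemma cosh_gt1: "(e::real) \<noteq> 0 \<Longrightarrow> cosh e > 1"
  using cosh_real_ge_1[of e] cosh_real_one_iff[of e] by (simp add: less_le)

lemma le_eps:
  fixes x y c :: real
  assumes c: "c > 0" and h: "\<And>e. e > 0 \<Longrightarrow> x \<le> y + e * c"
  shows "x \<le> y"
proof (rule ccontr)
  assume "\<not> x \<le> y"
  hence "(x - y) / (2 * c) > 0" using c by simp
  from h[OF this] have "x \<le> y + (x - y) / 2" using c by simp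
  thus False using \<open>\<not> x \<le> y\<close> by (simp add: field_simps)
qed

lemma arcosh_le_E: "1 \<le> x \<Longrightarrow> x \<le> cosh E \<Longrightarrow> E \<ge> 0 \<Longrightarrow> arcosh x \<le> (E::real)"
  using arcosh_less_iff_real[of "cosh E" x] arcosh_cosh_real[of E] cosh_real_ge_1[of E] by linarith

lemma arcosh_ge_E: "cosh E \<le> x \<Longrightarrow> E \<ge> 0 \<Longrightarrow> E \<le> arcosh (x::real)"
  using arcosh_less_iff_real[of x "cosh E"] arcosh_cosh_real[of E] cosh_real_ge_1[of E] by linarith

lemma deriv_sqrt_sq:
  assumes "(H has_real_derivative d) (at t within S)" "(H t)\<^sup>2 > 1"
  shows "((\<lambda>\<tau>. sqrt ((H \<tau>)\<^sup>2 - 1)) has_real_derivative (H t * d / sqrt ((H t)\<^sup>2 - 1))) (at t within S)"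
proof -
  have "((\<lambda>\<tau>. (H \<tau>)\<^sup>2 - 1) has_real_derivative 2 * H t * d) (at t within S)"
    using DERIV_power[OF assms(1), of 2] by (auto intro!: derivative_eq_intros assms(1))
  from DERIV_chain2[OF DERIV_real_sqrt[of "(H t)\<^sup>2 - 1"] this] assms(2)
  show ?thesis by (simp add: field_simps)
qed

context curve begin

lemma hdist_ge0: "s \<in> {a..b} \<Longrightarrow> t \<in> {a..b} \<Longrightarrow> hdist n (\<gamma> s) (\<gamma> t) \<ge> 0"
  unfolding hdist_def using rev_cs hyp by auto

lemma quasi_upper:
  assumes s: "s \<in> {a..b}" and t: "t \<in> {a..b}" and st: "s \<le> t"
  shows "hdist n (\<gamma> s) (\<gamma> t) \<le> t - s"
proof -
  define p where "p = \<gamma> s"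
  define H where "H \<tau> = mink n p (\<gamma> \<tau>)" for \<tau>
  define H' where "H' \<tau> = mink n p (\<gamma>' \<tau>)" for \<tau>
  have pp: "mink n p p = -1" unfolding p_def by (rule gg[OF s])
  have dH: "(H has_real_derivative H' \<tau>) (at \<tau> within {a..b})" if "\<tau> \<in> {a..b}" for \<tau>
    unfolding H_def H'_def using phi_props(1)[OF that] .
  have HH': "(H' \<tau>)\<^sup>2 \<le> (H \<tau>)\<^sup>2 - 1" if "\<tau> \<in> {a..b}" for \<tau>
    using phi_props(4)[OF that, of p] pp unfolding H_def H'_def by simp
  have Hs: "H s = -1" unfolding H_def p_def by (rule gg[OF s])
  have contH: "continuous_on {s..b} H"
  proof (rule DERIV_continuous_on[of _ _ H'])
    fix x assume x: "x \<in> {s..b}"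
    show "(H has_real_derivative H' x) (at x within {s..b})"
      by (rule DERIV_subset[OF dH]) (use x s in auto)
  qed
  have main: "- H t < cosh (e + (1 + e) * (t - s))" if e: "e > 0" for e
  proof -
    define F where "F \<tau> = cosh (e + (1 + e) * (\<tau> - s)) + H \<tau>" for \<tau>
    have "\<forall>\<tau>\<in>{s..b}. F \<tau> > 0"
    proof (rule barrier)
      show "s \<le> b" using s by simp
      show "continuous_on {s..b} F" unfolding F_def by (intro continuous_intros contH)
      show "F s > 0" unfolding F_def Hs using e cosh_gt1[of e] by auto
    next
      fix t1 assume t1: "s < t1" "t1 \<le> b" "\<forall>\<tau>\<in>{s..<t1}. F \<tau> > 0" "F t1 = 0"
      define E where "E = e + (1 + e) * (t1 - s)"
      have E0: "E > 0" unfolding E_def using e t1 by (simp add: add_pos_nonneg)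
      have t1D: "t1 \<in> {a..b}" using t1 s by auto
      have dF: "(F has_real_derivative ((1 + e) * sinh E + H' t1)) (at t1 within {a..b})"
        unfolding F_def E_def
        by (auto intro!: derivative_eq_intros dH[OF t1D])
      have HE: "H t1 = - cosh E" using t1(4) unfolding F_def E_def by simp
      have "(H' t1)\<^sup>2 \<le> (sinh E)\<^sup>2" using HH'[OF t1D] HE by (simp add: sinh_square_eq)
      hence "\<bar>H' t1\<bar> \<le> \<bar>sinh E\<bar>" by (simp only: abs_le_square_iff)
      hence "- H' t1 \<le> sinh E" using E0 by simp
      moreover have "sinh E > 0" using E0 by simp
      moreover have "e * sinh E > 0" using e \<open>sinh E > 0\<close> by simp
      ultimately have "(1 + e) * sinh E + H' t1 > 0" by (simp add: algebra_simps)
      show False by (rule touch[OF dF \<open>(1 + e) * sinh E + H' t1 > 0\<close> _ t1(1,2,3,4)]) (use s in simp)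
    qed
    hence "F t > 0" using t st by auto
    thus ?thesis unfolding F_def by simp
  qed
  have h1: "- H t \<ge> 1" unfolding H_def p_def using rev_cs hyp s t by auto
  have le: "hdist n (\<gamma> s) (\<gamma> t) \<le> (t - s) + e * (1 + (t - s))" if e: "e > 0" for e
  proof -
    have "hdist n (\<gamma> s) (\<gamma> t) = arcosh (- H t)" unfolding hdist_def H_def p_def ..
    also have "\<dots> \<le> e + (1 + e) * (t - s)"
      using main[OF e] h1 e st by (intro arcosh_le_E) auto
    finally show ?thesis by (simp add: algebra_simps)
  qed
  show ?thesis by (rule le_eps[of "1 + (t - s)"]) (use le st in auto)
qed

end

context curve begin

lemma K2: "K\<^sup>2 < 1" using K0 K1 power_strict_mono[of K 1 2] by simp

lemma c_pos: "sqrt (1 - K\<^sup>2) > 0" using K0 K1 by (simp add: power2_less_1_iff abs_less_iff)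
lemma c_le1: "sqrt (1 - K\<^sup>2) \<le> 1" using K0 by simp

lemma quasi_lower_mu:
  assumes s: "s \<in> {a..b}" and t: "t \<in> {a..b}" and st: "s \<le> t"
    and mu0: "0 < \<mu>" and muc: "\<mu> < sqrt (1 - K\<^sup>2)"
  shows "cosh (\<mu> * (t - s)) \<le> - mink n (\<gamma> s) (\<gamma> t)"
proof -
  have mu1: "\<mu> < 1" using muc c_le1 by linarith
  have mu2: "\<mu>\<^sup>2 < 1 - K\<^sup>2"
  proof -
    have "\<mu>\<^sup>2 < (sqrt (1 - K\<^sup>2))\<^sup>2" using mu0 muc by (intro power_strict_mono) auto
    thus ?thesis using K2 by simp
  qed
  have main: "cosh (\<mu> * (t - s)) \<le> cosh e * (- mink n (\<gamma> s) (\<gamma> t)) + sinh e * mink n (\<gamma>' s) (\<gamma> t)"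
    if e: "e > 0" for e
  proof -
    define p where "p = (\<lambda>i. cosh e * \<gamma> s i - sinh e * \<gamma>' s i)"
    define H where "H \<tau> = mink n p (\<gamma> \<tau>)" for \<tau>
    define H' where "H' \<tau> = mink n p (\<gamma>' \<tau>)" for \<tau>
    define H'' where "H'' \<tau> = mink n p (\<gamma>'' \<tau>)" for \<tau>
    have r1: "mink n (\<gamma> s) (\<gamma>' s) = 0" "mink n (\<gamma>' s) (\<gamma> s) = 0"
      using rel1[OF s] mink_sym by metis+
    have pp: "mink n p p = -1" unfolding p_def using r1 gg[OF s] unit s
      by (simp add: algebra_simps power2_eq_square[symmetric] cosh_square_eq)
    have Hs: "H s = - cosh e" unfolding H_def p_def using r1 gg[OF s] by simp
    have H's: "H' s = - sinh e" unfolding H'_def p_def using r1 unit s by simp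
    have dH: "(H has_real_derivative H' \<tau>) (at \<tau> within {a..b})" if "\<tau> \<in> {a..b}" for \<tau>
      unfolding H_def H'_def using phi_props(1)[OF that] .
    have dH': "(H' has_real_derivative H'' \<tau>) (at \<tau> within {a..b})" if "\<tau> \<in> {a..b}" for \<tau>
      unfolding H'_def H''_def using phi_props(2)[OF that] .
    have ineq: "(H'' \<tau> - H \<tau>)\<^sup>2 \<le> K\<^sup>2 * (-1 + (H \<tau>)\<^sup>2 - (H' \<tau>)\<^sup>2)" if "\<tau> \<in> {a..b}" for \<tau>
      using phi_props(3)[OF that, of p] pp unfolding H_def H'_def H''_def by simp
    have Hge: "(H \<tau>)\<^sup>2 - 1 \<ge> 0" if "\<tau> \<in> {a..b}" for \<tau>
    proof -
      have "0 \<le> -1 + (H \<tau>)\<^sup>2 - (H' \<tau>)\<^sup>2"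
        using phi_props(4)[OF that, of p] pp unfolding H_def H'_def by simp
      moreover have "(H' \<tau>)\<^sup>2 \<ge> 0" by simp
      ultimately show ?thesis by linarith
    qed
    have contH: "continuous_on {s..b} H"
    proof (rule DERIV_continuous_on[of _ _ H'])
      fix x assume x: "x \<in> {s..b}"
      show "(H has_real_derivative H' x) (at x within {s..b})"
        by (rule DERIV_subset[OF dH]) (use x s in auto)
    qed
    have contH': "continuous_on {s..b} H'"
    proof (rule DERIV_continuous_on[of _ _ H''])
      fix x assume x: "x \<in> {s..b}"
      show "(H' has_real_derivative H'' x) (at x within {s..b})"
        by (rule DERIV_subset[OF dH']) (use x s in auto)
    qed
    have atw: "at x within {a..b} = at x" if "a < x" "x < b" for x by (rule at_within_Icc_at[OF that])
    have se: "sinh e > 0" using e by simp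
    \<comment> \<open>Step 1: angle condition\<close>
    define F3 where "F3 \<tau> = - H' \<tau> - \<mu> * sqrt ((H \<tau>)\<^sup>2 - 1)" for \<tau>
    have step1: "\<forall>\<tau>\<in>{s..b}. F3 \<tau> > 0"
    proof (rule barrier)
      show "s \<le> b" using s by simp
      show "continuous_on {s..b} F3" unfolding F3_def by (intro continuous_intros contH contH')
      have "F3 s = sinh e - \<mu> * sinh e" unfolding F3_def Hs H's using sqrt_cosh[of e] e by simp
      also have "\<dots> > 0" using se mu1 by simp
      finally show "F3 s > 0" .
    next
      fix t1 assume t1: "s < t1" "t1 \<le> b" "\<forall>\<tau>\<in>{s..<t1}. F3 \<tau> > 0" "F3 t1 = 0"
      have t1D: "t1 \<in> {a..b}" using t1 s by auto
      have "- H s < - H t1"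
      proof (rule DERIV_pos_imp_increasing_open[OF t1(1)])
        fix x assume x: "s < x" "x < t1"
        have "F3 x > 0" using t1(3) x by auto
        moreover have "\<mu> * sqrt ((H x)\<^sup>2 - 1) \<ge> 0" using mu0 Hge[of x] x s t1 by simp
        ultimately have "- H' x > 0" unfolding F3_def by linarith
        moreover have "DERIV (\<lambda>\<tau>. - H \<tau>) x :> - H' x"
          using DERIV_minus[OF dH[of x]] atw[of x] x s t1 by auto
        ultimately show "\<exists>y. DERIV (\<lambda>\<tau>. - H \<tau>) x :> y \<and> 0 < y" by blast
      next
        show "continuous_on {s..t1} (\<lambda>\<tau>. - H \<tau>)"
          by (intro continuous_intros continuous_on_subset[OF contH]) (use t1 in auto)
      qed
      hence h1: "- H t1 > 1" using Hs cosh_gt1[of e] e by simp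
      define h where "h = - H t1"
      define r where "r = sqrt ((H t1)\<^sup>2 - 1)"
      have "1\<^sup>2 < (- H t1)\<^sup>2" using h1 by (intro power_strict_mono) auto
      hence Hsq: "(H t1)\<^sup>2 > 1" by simp
      have r0: "r > 0" unfolding r_def using Hsq by simp
      have rr: "r\<^sup>2 = h\<^sup>2 - 1" unfolding r_def h_def using Hsq by simp
      have rh: "r < h"
      proof -
        have "r\<^sup>2 < h\<^sup>2" using rr by simp
        thus ?thesis using h1 r0 unfolding h_def by (smt (verit) power_mono)
      qed
      have H't1: "H' t1 = - \<mu> * r" using t1(4) unfolding F3_def r_def by simp
      have dF3: "(F3 has_real_derivative (- H'' t1 - \<mu> * (H t1 * H' t1 / sqrt ((H t1)\<^sup>2 - 1)))) (at t1 within {a..b})"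
        unfolding F3_def
        by (intro DERIV_diff DERIV_minus DERIV_cmult dH'[OF t1D] deriv_sqrt_sq dH[OF t1D] Hsq)
      have dval: "- H'' t1 - \<mu> * (H t1 * H' t1 / sqrt ((H t1)\<^sup>2 - 1)) = - H'' t1 - \<mu>\<^sup>2 * h"
        using r0 unfolding H't1 r_def[symmetric] h_def by (simp add: power2_eq_square field_simps)
      define m where "m = sqrt (1 - \<mu>\<^sup>2)"
      have m0: "m > 0" unfolding m_def using mu1 mu0 by (simp add: power2_less_1_iff abs_less_iff)
      have "\<mu>\<^sup>2 < 1" using mu1 mu0 power_strict_mono[of \<mu> 1 2] by simp
      hence mm: "m\<^sup>2 = 1 - \<mu>\<^sup>2" unfolding m_def by simp
      have mK: "m > K"
      proof -
        have "K\<^sup>2 < m\<^sup>2" using mm mu2 by simp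
        thus ?thesis using m0 K0 by (smt (verit) power_mono)
      qed
      have "(H'' t1 - H t1)\<^sup>2 \<le> K\<^sup>2 * (-1 + (H t1)\<^sup>2 - (H' t1)\<^sup>2)" by (rule ineq[OF t1D])
      also have "-1 + (H t1)\<^sup>2 - (H' t1)\<^sup>2 = m\<^sup>2 * r\<^sup>2"
        unfolding H't1 mm using rr unfolding h_def by (simp add: power2_eq_square algebra_simps)
      finally have "(H'' t1 - H t1)\<^sup>2 \<le> (K * m * r)\<^sup>2" by (simp add: power_mult_distrib)
      hence "\<bar>H'' t1 - H t1\<bar> \<le> \<bar>K * m * r\<bar>" by (simp only: abs_le_square_iff)
      hence bnd: "H'' t1 - H t1 \<le> K * m * r" using K0 m0 r0 by simp
      have "m * h > K * r"
      proof -
        have "m * h > K * h" using mK h1 unfolding h_def by simp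
        moreover have "K * h \<ge> K * r" using K0 rh by (simp add: mult_left_mono)
        ultimately show ?thesis by simp
      qed
      hence "m * (m * h) > m * (K * r)" using m0 by simp
      hence pos: "m\<^sup>2 * h - K * m * r > 0" by (simp add: power2_eq_square algebra_simps)
      have "- H'' t1 - \<mu>\<^sup>2 * h > 0"
      proof -
        have "- H'' t1 - \<mu>\<^sup>2 * h \<ge> h - K * m * r - \<mu>\<^sup>2 * h" using bnd unfolding h_def by simp
        also have "h - K * m * r - \<mu>\<^sup>2 * h = m\<^sup>2 * h - K * m * r" unfolding mm by (simp add: algebra_simps)
        finally show ?thesis using pos by simp
      qed
      hence dpos: "- H'' t1 - \<mu> * (H t1 * H' t1 / sqrt ((H t1)\<^sup>2 - 1)) > 0" using dval by simp
      show False by (rule touch[OF dF3 dpos _ t1(1,2,3,4)]) (use s in simp)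
    qed
    define G where "G \<tau> = - H \<tau> - cosh (e / 2 + \<mu> * (\<tau> - s))" for \<tau>
    have step2: "\<forall>\<tau>\<in>{s..b}. G \<tau> > 0"
    proof (rule barrier)
      show "s \<le> b" using s by simp
      show "continuous_on {s..b} G" unfolding G_def by (intro continuous_intros contH)
      have "cosh (e / 2) < cosh e" using e by (subst cosh_real_nonneg_less_iff) auto
      thus "G s > 0" unfolding G_def Hs by simp
    next
      fix t1 assume t1: "s < t1" "t1 \<le> b" "\<forall>\<tau>\<in>{s..<t1}. G \<tau> > 0" "G t1 = 0"
      have t1D: "t1 \<in> {a..b}" using t1 s by auto
      define E where "E = e / 2 + \<mu> * (t1 - s)"
      have E0: "E > 0" unfolding E_def using e mu0 t1 by (simp add: add_pos_nonneg)
      have dG: "(G has_real_derivative (- H' t1 - sinh E * \<mu>)) (at t1 within {a..b})"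
        unfolding G_def E_def by (auto intro!: derivative_eq_intros dH[OF t1D])
      have HE: "- H t1 = cosh E" using t1(4) unfolding G_def E_def by simp
      have "F3 t1 > 0" using step1 t1 by auto
      hence "- H' t1 > \<mu> * sqrt ((H t1)\<^sup>2 - 1)" unfolding F3_def by simp
      also have "sqrt ((H t1)\<^sup>2 - 1) = sinh E"
      proof -
        have "(H t1)\<^sup>2 = (- H t1)\<^sup>2" by simp
        also have "\<dots> = (cosh E)\<^sup>2" unfolding HE ..
        finally show ?thesis using sqrt_cosh[of E] E0 by simp
      qed
      finally have dpos: "- H' t1 - sinh E * \<mu> > 0" by (simp add: mult.commute)
      show False by (rule touch[OF dG dpos _ t1(1,2,3,4)]) (use s in simp)
    qed
    have "G t > 0" using step2 t st by auto
    hence "cosh (e / 2 + \<mu> * (t - s)) < - H t" unfolding G_def by simp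
    moreover have "cosh (\<mu> * (t - s)) \<le> cosh (e / 2 + \<mu> * (t - s))"
      using e mu0 st by (subst cosh_real_nonneg_le_iff) auto
    moreover have "- H t = cosh e * (- mink n (\<gamma> s) (\<gamma> t)) + sinh e * mink n (\<gamma>' s) (\<gamma> t)"
      unfolding H_def p_def by simp
    ultimately show ?thesis by simp
  qed
  define A0 where "A0 = - mink n (\<gamma> s) (\<gamma> t)"
  define B0 where "B0 = mink n (\<gamma>' s) (\<gamma> t)"
  have lim: "((\<lambda>e. cosh e * A0 + sinh e * B0) \<longlongrightarrow> cosh 0 * A0 + sinh 0 * B0) (at_right 0)"
    by (intro tendsto_intros)
  have ev: "eventually (\<lambda>e. cosh (\<mu> * (t - s)) \<le> cosh e * A0 + sinh e * B0) (at_right 0)"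
    unfolding eventually_at_right_field A0_def B0_def using main by (intro exI[of _ 1]) auto
  have "cosh (\<mu> * (t - s)) \<le> cosh 0 * A0 + sinh 0 * B0"
    by (rule tendsto_lowerbound[OF lim ev]) simp
  thus ?thesis unfolding A0_def by simp
qed

lemma quasi_lower:
  assumes s: "s \<in> {a..b}" and t: "t \<in> {a..b}" and st: "s \<le> t"
  shows "sqrt (1 - K\<^sup>2) * (t - s) \<le> hdist n (\<gamma> s) (\<gamma> t)"
proof (cases "s = t")
  case True
  thus ?thesis using hdist_ge0[OF s t] by simp
next
  case False
  hence ts: "t - s > 0" using st by simp
  show ?thesis
  proof (rule le_eps[of "t - s", OF ts])
  fix e :: real assume e: "e > 0"
  show "sqrt (1 - K\<^sup>2) * (t - s) \<le> hdist n (\<gamma> s) (\<gamma> t) + e * (t - s)"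
  proof (cases "e < sqrt (1 - K\<^sup>2)")
    case True
    have "cosh ((sqrt (1 - K\<^sup>2) - e) * (t - s)) \<le> - mink n (\<gamma> s) (\<gamma> t)"
      using True e by (intro quasi_lower_mu[OF s t st]) auto
    hence "(sqrt (1 - K\<^sup>2) - e) * (t - s) \<le> hdist n (\<gamma> s) (\<gamma> t)"
      unfolding hdist_def using True st by (intro arcosh_ge_E) auto
    thus ?thesis by (simp add: algebra_simps)
  next
    case False
    hence "sqrt (1 - K\<^sup>2) * (t - s) \<le> e * (t - s)" using st by (intro mult_right_mono) auto
    thus ?thesis using hdist_ge0[OF s t] by simp
  qed
  qed
qed

end

lemma arcosh_sq_bound:
  fixes v B :: real
  assumes "1 \<le> v" "v\<^sup>2 \<le> B"
  shows "arcosh v \<le> arcosh (sqrt B)"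
proof -
  have "v \<le> sqrt B" using assms by (intro real_le_rsqrt) 
  moreover have "1 \<le> sqrt B" using assms \<open>v \<le> sqrt B\<close> by linarith
  ultimately show ?thesis using arcosh_less_iff_real[of "sqrt B" v] assms by linarith
qed

context curve begin

definition \<rho> where "\<rho> = K / sqrt (1 - K\<^sup>2)"
definition fK where "fK = arcosh (sqrt (1 + 2 * \<rho>\<^sup>2))"

lemma rho0: "\<rho> \<ge> 0" unfolding \<rho>_def using K0 c_pos by simp

lemma mp_curve:
  assumes pp: "mink n p p = 1" and pa: "mink n p (\<gamma> a) \<le> 0" and pb: "mink n p (\<gamma> b) \<le> 0"
  shows "\<forall>\<tau>\<in>{a..b}. mink n p (\<gamma> \<tau>) \<le> \<rho>"
  unfolding \<rho>_def
proof (rule maxprin[OF ab K0 K1, of "\<lambda>\<tau>. mink n p (\<gamma> \<tau>)" "\<lambda>\<tau>. mink n p (\<gamma>' \<tau>)" "\<lambda>\<tau>. mink n p (\<gamma>'' \<tau>)"])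
  show "\<forall>t\<in>{a..b}. ((\<lambda>\<tau>. mink n p (\<gamma> \<tau>)) has_real_derivative mink n p (\<gamma>' t)) (at t within {a..b})"
    using phi_props(1) by blast
  show "\<forall>t\<in>{a..b}. ((\<lambda>\<tau>. mink n p (\<gamma>' \<tau>)) has_real_derivative mink n p (\<gamma>'' t)) (at t within {a..b})"
    using phi_props(2) by blast
  show "\<forall>t\<in>{a..b}. (mink n p (\<gamma>'' t) - mink n p (\<gamma> t))\<^sup>2 \<le> K\<^sup>2 * (1 + (mink n p (\<gamma> t))\<^sup>2 - (mink n p (\<gamma>' t))\<^sup>2)"
    using phi_props(3)[of _ p] pp by simp
qed (use pa pb in auto)

end

locale curve_seg = curve +
  fixes g :: "real \<Rightarrow> nat \<Rightarrow> real"
  assumes seg: "hyp_geodesic_segment n (\<gamma> a) (\<gamma> b) g"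
begin

abbreviation "x \<equiv> \<gamma> a"
abbreviation "y \<equiv> \<gamma> b"
definition "len = hdist n x y"
definition "u = (\<lambda>i. (y i - cosh len * x i) / sinh len)"

lemma aD: "a \<in> {a..b}" and bD: "b \<in> {a..b}" using ab by auto

lemma l_pos: "len > 0"
proof -
  have "sqrt (1 - K\<^sup>2) * (b - a) \<le> len" unfolding len_def using quasi_lower[OF aD bD] ab by simp
  moreover have "sqrt (1 - K\<^sup>2) * (b - a) > 0" using c_pos ab by simp
  ultimately show ?thesis by simp
qed

lemma xx: "mink n x x = -1" using gg[OF aD] .
lemma yy: "mink n y y = -1" using gg[OF bD] .
lemma C_def': "- mink n x y = cosh len"
  unfolding len_def hdist_def using rev_cs hyp aD bD by simp
lemma xy: "mink n x y = - cosh len" using C_def' by simp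
lemma yx: "mink n y x = - cosh len" using C_def' mink_sym[of n y x] by simp
lemma S_pos: "sinh len > 0" using l_pos by simp

lemma y_eq: "y = (\<lambda>i. cosh len * x i + sinh len * u i)"
  unfolding u_def using S_pos by (auto simp: field_simps)

lemma ux: "mink n u x = 0"
  unfolding u_def using xx xy yx by simp
lemma uu: "mink n u u = 1"
proof -
  have "mink n u u = (-1 + 2 * (cosh len)\<^sup>2 - (cosh len)\<^sup>2) / (sinh len)\<^sup>2"
    unfolding u_def using xx yy xy yx
    by (simp add: power2_eq_square field_simps)
  also have "\<dots> = 1" using S_pos by (simp add: cosh_square_eq)
  finally show ?thesis .
qed
lemma uy: "mink n u y = sinh len"
proof -
  have "mink n u y = ((cosh len)\<^sup>2 - 1) / sinh len"
    unfolding u_def using xx yy xy yx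
    by (simp add: power2_eq_square field_simps)
  also have "\<dots> = (sinh len)\<^sup>2 / sinh len" by (simp add: sinh_square_eq)
  also have "\<dots> = sinh len" using S_pos by (simp add: power2_eq_square)
  finally show ?thesis .
qed

lemma g_props: "g 0 = x" "g len = y" "\<And>s. s \<in> {0..len} \<Longrightarrow> hyp_pt n (g s)"
  "\<And>s t. s \<in> {0..len} \<Longrightarrow> t \<in> {0..len} \<Longrightarrow> hdist n (g s) (g t) = \<bar>s - t\<bar>"
  using seg unfolding hyp_geodesic_segment_def len_def by auto

lemma g_repr:
  assumes sg: "\<sigma> \<in> {0..len}"
  shows "mink n (g \<sigma>) p = cosh \<sigma> * mink n x p + sinh \<sigma> * mink n u p"
proof -
  have l0: "0 \<in> {0..len}" "len \<in> {0..len}" using l_pos by auto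
  have gx: "- mink n (g \<sigma>) x = cosh \<sigma>"
  proof -
    have "arcosh (- mink n (g \<sigma>) x) = \<sigma>"
      using g_props(4)[OF sg l0(1)] g_props(1) sg unfolding hdist_def by simp
    moreover have "- mink n (g \<sigma>) x \<ge> 1" using rev_cs g_props(3)[OF sg] hyp aD by auto
    ultimately show ?thesis by (metis cosh_arcosh_real)
  qed
  have gy: "- mink n (g \<sigma>) y = cosh (len - \<sigma>)"
  proof -
    have "arcosh (- mink n (g \<sigma>) y) = len - \<sigma>"
      using g_props(4)[OF sg l0(2)] g_props(2) sg unfolding hdist_def by simp
    moreover have "- mink n (g \<sigma>) y \<ge> 1" using rev_cs g_props(3)[OF sg] hyp bD by auto
    ultimately show ?thesis by (metis cosh_arcosh_real)
  qed
  have gu: "mink n (g \<sigma>) u = sinh \<sigma>"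
  proof -
    have "mink n (g \<sigma>) u = (mink n (g \<sigma>) y - cosh len * mink n (g \<sigma>) x) / sinh len"
      unfolding u_def by simp
    also have "\<dots> = (- cosh (len - \<sigma>) + cosh len * cosh \<sigma>) / sinh len"
    proof -
      have e1: "mink n (g \<sigma>) x = - cosh \<sigma>" "mink n (g \<sigma>) y = - cosh (len - \<sigma>)" using gx gy by linarith+
      show ?thesis unfolding e1 by simp
    qed
    also have "\<dots> = sinh \<sigma>" using S_pos by (simp add: cosh_diff)
    finally show ?thesis .
  qed
  have gx': "mink n (g \<sigma>) x = - cosh \<sigma>" using gx by simp
  define w where "w = (\<lambda>i. g \<sigma> i - cosh \<sigma> * x i - sinh \<sigma> * u i)"
  have wx: "mink n w x = 0" unfolding w_def using gx xx ux by simp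
  have wu: "mink n w u = 0" unfolding w_def using gu uu mink_sym[of n x u] ux by simp
  have gg': "mink n (g \<sigma>) (g \<sigma>) = -1" using g_props(3)[OF sg] unfolding hyp_pt_def by simp
  have ww: "mink n w w = 0"
  proof -
    have e: "(\<lambda>i. g \<sigma> i - cosh \<sigma> * x i - sinh \<sigma> * u i) = w" unfolding w_def ..
    have "mink n w (\<lambda>i. g \<sigma> i - cosh \<sigma> * x i - sinh \<sigma> * u i) = mink n w (g \<sigma>)"
      using wx wu by simp
    hence "mink n w w = mink n w (g \<sigma>)" unfolding e .
    also have "\<dots> = -1 + (cosh \<sigma>)\<^sup>2 - (sinh \<sigma>)\<^sup>2"
      unfolding w_def using gg' gx' gu mink_sym[of n x "g \<sigma>"] mink_sym[of n u "g \<sigma>"]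
      by (simp add: power2_eq_square)
    also have "\<dots> = 0" by (simp add: cosh_square_eq)
    finally show ?thesis .
  qed
  define pt where "pt = (\<lambda>i. p i + mink n p x * x i)"
  have ptx: "mink n pt x = 0" unfolding pt_def using xx by simp
  have "(mink n w pt)\<^sup>2 \<le> mink n w w * mink n pt pt" by (rule mink_cs[OF xx wx ptx])
  hence "mink n w pt = 0" using ww by simp
  moreover have "mink n w pt = mink n w p" unfolding pt_def using wx by simp
  ultimately have "mink n w p = 0" by simp
  thus ?thesis unfolding w_def by simp
qed

end

lemma mink_neg_left[simp]: "mink n (\<lambda>i. - f i) z = - mink n f z"
  unfolding mink_def by (simp add: sum_negf)
lemma mink_neg_right[simp]: "mink n z (\<lambda>i. - f i) = - mink n z f"
  unfolding mink_def by (simp add: sum_negf)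

context curve_seg begin

definition "X \<tau> = - mink n x (\<gamma> \<tau>)"
definition "U \<tau> = mink n u (\<gamma> \<tau>)"

lemma xu: "mink n x u = 0" using ux mink_sym by metis

lemma XU_props:
  assumes t: "\<tau> \<in> {a..b}"
  shows "X \<tau> \<ge> 1" "(X \<tau>)\<^sup>2 - (U \<tau>)\<^sup>2 - 1 \<ge> 0" "(X \<tau>)\<^sup>2 - (U \<tau>)\<^sup>2 - 1 \<le> \<rho>\<^sup>2"
    "- U \<tau> \<le> \<rho>" "cosh len * U \<tau> - sinh len * X \<tau> \<le> \<rho>"
proof -
  define z where "z = \<gamma> \<tau>"
  define R where "R = (X \<tau>)\<^sup>2 - (U \<tau>)\<^sup>2 - 1"
  show "X \<tau> \<ge> 1" unfolding X_def using rev_cs hyp aD t by auto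
  have zz: "mink n z z = -1" unfolding z_def by (rule gg[OF t])
  have zx: "mink n z x = - X \<tau>" unfolding X_def z_def by (simp add: mink_sym[of n "\<gamma> \<tau>" x])
  have zu: "mink n z u = U \<tau>" unfolding U_def z_def using mink_sym by metis
  have xz: "mink n x z = - X \<tau>" unfolding X_def z_def by simp
  have uz: "mink n u z = U \<tau>" unfolding U_def z_def by simp
  define wz where "wz = (\<lambda>i. z i - X \<tau> * x i - U \<tau> * u i)"
  have wzx: "mink n wz x = 0" unfolding wz_def using zx xx ux by simp
  have wzu: "mink n wz u = 0" unfolding wz_def using zu xu uu by simp
  have wzz: "mink n wz z = R" unfolding wz_def R_def using zz xz uz by (simp add: power2_eq_square)
  have e: "(\<lambda>i. z i - X \<tau> * x i - U \<tau> * u i) = wz" unfolding wz_def ..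
  have "mink n wz (\<lambda>i. z i - X \<tau> * x i - U \<tau> * u i) = R" using wzx wzu wzz by simp
  hence wzwz: "mink n wz wz = R" unfolding e .
  have R0: "R \<ge> 0" using mink_psd[OF xx wzx] wzwz by simp
  thus "(X \<tau>)\<^sup>2 - (U \<tau>)\<^sup>2 - 1 \<ge> 0" unfolding R_def .
  show "(X \<tau>)\<^sup>2 - (U \<tau>)\<^sup>2 - 1 \<le> \<rho>\<^sup>2"
  proof (cases "R = 0")
    case True thus ?thesis unfolding R_def by simp
  next
    case False
    hence Rp: "R > 0" using R0 by simp
    define \<nu> where "\<nu> = (\<lambda>i. wz i / sqrt R)"
    have "mink n \<nu> \<nu> = mink n wz wz / sqrt R / sqrt R" unfolding \<nu>_def by simp
    hence nn: "mink n \<nu> \<nu> = 1" using wzwz Rp by simp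
    have nx: "mink n \<nu> x = 0" unfolding \<nu>_def using wzx by simp
    have ny: "mink n \<nu> y = 0"
    proof -
      have "mink n \<nu> y = mink n \<nu> (\<lambda>i. cosh len * x i + sinh len * u i)" using y_eq by simp
      also have "\<dots> = 0" unfolding \<nu>_def using wzx wzu by simp
      finally show ?thesis .
    qed
    have "mink n \<nu> (\<gamma> \<tau>) \<le> \<rho>" using mp_curve[of \<nu>] nn nx ny t by auto
    moreover have "mink n \<nu> (\<gamma> \<tau>) = sqrt R" unfolding \<nu>_def z_def[symmetric] using Rp wzz
      by (simp add: real_div_sqrt)
    ultimately have "sqrt R \<le> \<rho>" by simp
    hence "(sqrt R)\<^sup>2 \<le> \<rho>\<^sup>2" using Rp by (intro power_mono) auto
    thus ?thesis using R0 unfolding R_def by simp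
  qed
  show "- U \<tau> \<le> \<rho>"
  proof -
    define \<nu> where "\<nu> = (\<lambda>i. - u i)"
    have "mink n \<nu> \<nu> = 1" "mink n \<nu> x = 0" "mink n \<nu> y \<le> 0"
      unfolding \<nu>_def using uu ux uy S_pos by simp_all
    hence "mink n \<nu> (\<gamma> \<tau>) \<le> \<rho>" using mp_curve[of \<nu>] t by auto
    thus ?thesis unfolding \<nu>_def U_def by simp
  qed
  show "cosh len * U \<tau> - sinh len * X \<tau> \<le> \<rho>"
  proof -
    define \<nu> where "\<nu> = (\<lambda>i. sinh len * x i + cosh len * u i)"
    have "mink n \<nu> \<nu> = (cosh len)\<^sup>2 - (sinh len)\<^sup>2"
      unfolding \<nu>_def using uu ux xu xx by (simp add: power2_eq_square)
    hence nn: "mink n \<nu> \<nu> = 1" by (simp add: cosh_square_eq)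
    have "mink n \<nu> x = - sinh len" unfolding \<nu>_def using xx ux by simp
    hence nx: "mink n \<nu> x \<le> 0" using S_pos by simp
    have ny: "mink n \<nu> y = 0" unfolding \<nu>_def using xy uy by simp
    have "mink n \<nu> (\<gamma> \<tau>) \<le> \<rho>" using mp_curve[of \<nu>] nn nx ny t by auto
    moreover have "mink n \<nu> (\<gamma> \<tau>) = cosh len * U \<tau> - sinh len * X \<tau>"
      unfolding \<nu>_def X_def U_def by simp
    ultimately show ?thesis by simp
  qed
qed

lemma dist_formula:
  assumes t: "\<tau> \<in> {a..b}" and sg: "\<sigma> \<in> {0..len}"
  shows "- mink n (\<gamma> \<tau>) (g \<sigma>) = X \<tau> * cosh \<sigma> - U \<tau> * sinh \<sigma>"
    and "X \<tau> * cosh \<sigma> - U \<tau> * sinh \<sigma> \<ge> 1"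
proof -
  have "mink n (\<gamma> \<tau>) (g \<sigma>) = mink n (g \<sigma>) (\<gamma> \<tau>)" by (rule mink_sym)
  also have "\<dots> = cosh \<sigma> * mink n x (\<gamma> \<tau>) + sinh \<sigma> * mink n u (\<gamma> \<tau>)" by (rule g_repr[OF sg])
  finally show e: "- mink n (\<gamma> \<tau>) (g \<sigma>) = X \<tau> * cosh \<sigma> - U \<tau> * sinh \<sigma>"
    unfolding X_def U_def by (simp add: algebra_simps)
  have "- mink n (\<gamma> \<tau>) (g \<sigma>) \<ge> 1" using rev_cs hyp t g_props(3)[OF sg] by auto
  thus "X \<tau> * cosh \<sigma> - U \<tau> * sinh \<sigma> \<ge> 1" using e by simp
qed

lemma hd_bound:
  assumes t: "\<tau> \<in> {a..b}" and sg: "\<sigma> \<in> {0..len}"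
    and sq: "(X \<tau> * cosh \<sigma> - U \<tau> * sinh \<sigma>)\<^sup>2 \<le> 1 + 2 * \<rho>\<^sup>2"
  shows "hdist n (\<gamma> \<tau>) (g \<sigma>) \<le> fK"
  unfolding hdist_def fK_def dist_formula(1)[OF t sg]
  by (rule arcosh_sq_bound[OF dist_formula(2)[OF t sg] sq])

lemma dir1:
  assumes t: "\<tau> \<in> {a..b}"
  shows "\<exists>\<sigma>\<in>{0..len}. hdist n (\<gamma> \<tau>) (g \<sigma>) \<le> fK"
proof -
  note P = XU_props[OF t]
  define Xv where "Xv = X \<tau>"
  define Uv where "Uv = U \<tau>"
  define R where "R = Xv\<^sup>2 - Uv\<^sup>2 - 1"
  define V where "V = cosh len * Uv - sinh len * Xv"
  have X1: "Xv \<ge> 1" and R0: "R \<ge> 0" and Rr: "R \<le> \<rho>\<^sup>2" and Ur: "- Uv \<le> \<rho>" and Vr: "V \<le> \<rho>"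
    using P unfolding Xv_def Uv_def R_def V_def by auto
  have l0: "0 \<in> {0..len}" "len \<in> {0..len}" using l_pos by auto
  show ?thesis
  proof (cases "Uv \<le> 0")
    case True
    have "Uv\<^sup>2 \<le> \<rho>\<^sup>2"
    proof -
      have "(- Uv)\<^sup>2 \<le> \<rho>\<^sup>2" using True Ur by (intro power_mono) auto
      thus ?thesis by simp
    qed
    hence "(X \<tau> * cosh 0 - U \<tau> * sinh 0)\<^sup>2 \<le> 1 + 2 * \<rho>\<^sup>2"
      using Rr unfolding R_def Xv_def Uv_def by simp
    thus ?thesis using hd_bound[OF t l0(1)] l0 by blast
  next
    case False
    hence U0: "Uv > 0" by simp
    show ?thesis
    proof (cases "V \<ge> 0")
      case True
      have "V\<^sup>2 \<le> \<rho>\<^sup>2" using True Vr by (intro power_mono) auto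
      have "(Xv * cosh len - Uv * sinh len)\<^sup>2 = (Xv\<^sup>2 - Uv\<^sup>2) * ((cosh len)\<^sup>2 - (sinh len)\<^sup>2) + V\<^sup>2"
        unfolding V_def by (simp add: power2_eq_square algebra_simps)
      also have "\<dots> = 1 + R + V\<^sup>2" unfolding R_def by (simp add: cosh_square_eq)
      finally have "(X \<tau> * cosh len - U \<tau> * sinh len)\<^sup>2 \<le> 1 + 2 * \<rho>\<^sup>2"
        using Rr \<open>V\<^sup>2 \<le> \<rho>\<^sup>2\<close> unfolding Xv_def Uv_def by simp
      thus ?thesis using hd_bound[OF t l0(2)] l0 by blast
    next
      case False
      hence V0: "V < 0" by simp
      define m where "m = sqrt (1 + R)"
      have m1: "m \<ge> 1" unfolding m_def using R0 by simp
      have mm: "m\<^sup>2 = Xv\<^sup>2 - Uv\<^sup>2" unfolding m_def R_def using R0 R_def by simp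
      define \<sigma> where "\<sigma> = arsinh (Uv / m)"
      have ss: "sinh \<sigma> = Uv / m" unfolding \<sigma>_def by simp
      have cs: "cosh \<sigma> = Xv / m"
      proof -
        have "cosh \<sigma> = sqrt ((Uv / m)\<^sup>2 + 1)" unfolding \<sigma>_def by (rule cosh_arsinh_real)
        also have "(Uv / m)\<^sup>2 + 1 = (Xv / m)\<^sup>2" using m1 mm by (simp add: field_simps)
        also have "sqrt \<dots> = Xv / m" using X1 m1 by simp
        finally show ?thesis .
      qed
      have sig0: "\<sigma> \<ge> 0" using ss U0 m1 by (metis divide_nonneg_pos less_le_trans zero_less_one less_imp_le sinh_real_nonneg_iff)
      have "Uv < m * sinh len"
      proof -
        have "Uv * cosh len < Xv * sinh len" using V0 unfolding V_def by (simp add: mult.commute)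
        moreover have "0 \<le> Uv * cosh len" using U0 by simp
        ultimately have "(Uv * cosh len)\<^sup>2 < (Xv * sinh len)\<^sup>2" by (intro power_strict_mono) auto
        hence "Uv\<^sup>2 * (1 + (sinh len)\<^sup>2) < (m\<^sup>2 + Uv\<^sup>2) * (sinh len)\<^sup>2"
          using mm by (simp add: power_mult_distrib cosh_square_eq add.commute)
        hence "Uv\<^sup>2 < (m * sinh len)\<^sup>2" by (simp add: algebra_simps power_mult_distrib)
        thus ?thesis using m1 S_pos by (smt (verit) power_mono zero_le_mult_iff)
      qed
      hence "sinh \<sigma> < sinh len" unfolding ss using m1 by (simp add: divide_less_eq mult.commute)
      hence "\<sigma> \<le> len" by simp
      hence sg: "\<sigma> \<in> {0..len}" using sig0 by simp
      have "X \<tau> * cosh \<sigma> - U \<tau> * sinh \<sigma> = m"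
        unfolding Xv_def[symmetric] Uv_def[symmetric] cs ss using m1 mm
        by (simp add: field_simps power2_eq_square)
      moreover have "m\<^sup>2 \<le> 1 + 2 * \<rho>\<^sup>2"
      proof -
        have "\<rho>\<^sup>2 \<ge> 0" by simp
        thus ?thesis using mm Rr unfolding R_def by linarith
      qed
      ultimately show ?thesis using hd_bound[OF t sg] sg by auto
    qed
  qed
qed

lemma dir2:
  assumes sg: "\<sigma> \<in> {0..len}"
  shows "\<exists>\<tau>\<in>{a..b}. hdist n (\<gamma> \<tau>) (g \<sigma>) \<le> fK"
proof -
  define \<nu> where "\<nu> = (\<lambda>i. sinh \<sigma> * x i + cosh \<sigma> * u i)"
  define \<theta> where "\<theta> \<tau> = mink n \<nu> (\<gamma> \<tau>)" for \<tau>
  have cont: "continuous_on {a..b} \<theta>"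
    unfolding \<theta>_def by (rule DERIV_continuous_on[OF phi_props(1)]) 
  have "\<theta> a = - sinh \<sigma>" unfolding \<theta>_def \<nu>_def using xx ux by simp
  hence ta: "\<theta> a \<le> 0" using sg by simp
  have "\<theta> b = sinh (len - \<sigma>)" unfolding \<theta>_def \<nu>_def using xy uy by (simp add: sinh_diff)
  hence tb: "0 \<le> \<theta> b" using sg by simp
  obtain \<tau> where tau: "a \<le> \<tau>" "\<tau> \<le> b" "\<theta> \<tau> = 0" using IVT'[of \<theta> a 0 b, OF ta tb _ cont] ab by auto
  have t: "\<tau> \<in> {a..b}" using tau by simp
  have th: "U \<tau> * cosh \<sigma> - X \<tau> * sinh \<sigma> = 0" using tau(3) unfolding \<theta>_def \<nu>_def X_def U_def
    by (simp add: algebra_simps)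
  note P = XU_props[OF t]
  have "(X \<tau> * cosh \<sigma> - U \<tau> * sinh \<sigma>)\<^sup>2 = (X \<tau> * cosh \<sigma> - U \<tau> * sinh \<sigma>)\<^sup>2 - (U \<tau> * cosh \<sigma> - X \<tau> * sinh \<sigma>)\<^sup>2"
    using th by simp
  also have "\<dots> = ((X \<tau>)\<^sup>2 - (U \<tau>)\<^sup>2) * ((cosh \<sigma>)\<^sup>2 - (sinh \<sigma>)\<^sup>2)" by (simp add: power2_eq_square algebra_simps)
  also have "\<dots> = (X \<tau>)\<^sup>2 - (U \<tau>)\<^sup>2" by (simp add: cosh_square_eq)
  also have "\<dots> \<le> 1 + 2 * \<rho>\<^sup>2" using P(3) by (smt (verit) zero_le_power2)
  finally show ?thesis using hd_bound[OF t sg] t by blast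
qed

lemma hausdorff: "hausdorff_dist_wrt (hdist n) (\<gamma> ` {a..b}) (g ` {0..len}) \<le> fK"
proof -
  have nn: "hdist n (\<gamma> \<tau>) (g \<sigma>) \<ge> 0" if "\<tau> \<in> {a..b}" "\<sigma> \<in> {0..len}" for \<tau> \<sigma>
    unfolding hdist_def using rev_cs hyp that g_props(3) by auto
  have A: "(SUP p\<in>\<gamma> ` {a..b}. INF q\<in>g ` {0..len}. hdist n p q) \<le> fK"
  proof (rule cSUP_least)
    show "\<gamma> ` {a..b} \<noteq> {}" using ab by auto
    fix p assume "p \<in> \<gamma> ` {a..b}"
    then obtain \<tau> where t: "\<tau> \<in> {a..b}" and p: "p = \<gamma> \<tau>" by auto
    obtain \<sigma> where sg: "\<sigma> \<in> {0..len}" and d: "hdist n (\<gamma> \<tau>) (g \<sigma>) \<le> fK" using dir1[OF t] by auto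
    show "(INF q\<in>g ` {0..len}. hdist n p q) \<le> fK" unfolding p
    proof (rule cINF_lower2[of _ _ "g \<sigma>"])
      show "bdd_below ((\<lambda>q. hdist n (\<gamma> \<tau>) q) ` g ` {0..len})" using nn[OF t] by (intro bdd_belowI2[of _ 0]) auto
    qed (use sg d in auto)
  qed
  have B: "(SUP q\<in>g ` {0..len}. INF p\<in>\<gamma> ` {a..b}. hdist n p q) \<le> fK"
  proof (rule cSUP_least)
    show "g ` {0..len} \<noteq> {}" using l_pos by auto
    fix q assume "q \<in> g ` {0..len}"
    then obtain \<sigma> where sg: "\<sigma> \<in> {0..len}" and q: "q = g \<sigma>" by auto
    obtain \<tau> where t: "\<tau> \<in> {a..b}" and d: "hdist n (\<gamma> \<tau>) (g \<sigma>) \<le> fK" using dir2[OF sg] by auto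
    show "(INF p\<in>\<gamma> ` {a..b}. hdist n p q) \<le> fK" unfolding q
    proof (rule cINF_lower2[of _ _ "\<gamma> \<tau>"])
      show "bdd_below ((\<lambda>p. hdist n p (g \<sigma>)) ` \<gamma> ` {a..b})" using nn sg by (intro bdd_belowI2[of _ 0]) auto
    qed (use t d in auto)
  qed
  show ?thesis unfolding hausdorff_dist_wrt_def using A B by simp
qed

end

lemma hdist_sym: "hdist n p q = hdist n q p" unfolding hdist_def using mink_sym by metis

theorem mainTheorem12:
  shows "\<exists>f :: real \<Rightarrow> real.
    continuous_on {0..<1} f \<and> (\<forall>x\<in>{0..<1}. f x \<ge> 0) \<and> f 0 = 0 \<and>
    (\<forall>(n::nat) (K::real) (a::real) (b::real)
       (\<gamma> :: real \<Rightarrow> nat \<Rightarrow> real) (\<gamma>' :: real \<Rightarrow> nat \<Rightarrow> real) (\<gamma>'' :: real \<Rightarrow> nat \<Rightarrow> real).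
       0 \<le> K \<and> K < 1 \<and> a \<le> b \<and>
       (\<forall>t\<in>{a..b}. hyp_pt n (\<gamma> t)) \<and>
       (\<forall>t\<in>{a..b}. \<forall>i. ((\<lambda>s. \<gamma> s i) has_real_derivative \<gamma>' t i) (at t within {a..b})) \<and>
       (\<forall>t\<in>{a..b}. \<forall>i. ((\<lambda>s. \<gamma>' s i) has_real_derivative \<gamma>'' t i) (at t within {a..b})) \<and>
       (\<forall>t\<in>{a..b}. mink n (\<gamma>' t) (\<gamma>' t) = 1) \<and>
       (\<forall>t\<in>{a..b}. geod_curv n \<gamma> \<gamma>'' t \<le> K)
       \<longrightarrow>
       quasi_geodesic (hdist n) (1 / sqrt (1 - K\<^sup>2)) {a..b} \<gamma> \<and>
       (\<forall>g. hyp_geodesic_segment n (\<gamma> a) (\<gamma> b) g \<longrightarrow>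
          hausdorff_dist_wrt (hdist n) (\<gamma> ` {a..b}) (g ` {0..hdist n (\<gamma> a) (\<gamma> b)}) \<le> f K))"
proof -
  define f where "f K = arcosh (sqrt (1 + 2 * (K / sqrt (1 - K\<^sup>2))\<^sup>2))" for K :: real
  have f_ge1: "sqrt (1 + 2 * (K / sqrt (1 - K\<^sup>2))\<^sup>2) \<ge> 1" for K :: real by simp
  have fnn: "f K \<ge> 0" for K unfolding f_def using f_ge1 by simp
  have cont: "continuous_on {0..<1} f"
  proof -
    have nz: "sqrt (1 - K\<^sup>2) \<noteq> 0" if "K \<in> {0..<1}" for K :: real
    proof -
      have "K\<^sup>2 < 1" using that power_strict_mono[of K 1 2] by simp
      thus ?thesis by simp
    qed
    have "continuous_on {0..<1} (\<lambda>K::real. sqrt (1 + 2 * (K / sqrt (1 - K\<^sup>2))\<^sup>2))"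
      using nz by (intro continuous_intros) auto
    thus ?thesis unfolding f_def [abs_def] by (rule continuous_on_arcosh') (use f_ge1 in auto)
  qed
  have f0: "f 0 = 0" unfolding f_def by simp
  have main: "quasi_geodesic (hdist n) (1 / sqrt (1 - K\<^sup>2)) {a..b} \<gamma> \<and>
       (\<forall>g. hyp_geodesic_segment n (\<gamma> a) (\<gamma> b) g \<longrightarrow>
          hausdorff_dist_wrt (hdist n) (\<gamma> ` {a..b}) (g ` {0..hdist n (\<gamma> a) (\<gamma> b)}) \<le> f K)"
    if K0: "0 \<le> K" and K1: "K < 1" and ab: "a \<le> b"
      and hyp: "\<forall>t\<in>{a..b}. hyp_pt n (\<gamma> t)"
      and d1: "\<forall>t\<in>{a..b}. \<forall>i. ((\<lambda>s. \<gamma> s i) has_real_derivative \<gamma>' t i) (at t within {a..b})"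
      and d2: "\<forall>t\<in>{a..b}. \<forall>i. ((\<lambda>s. \<gamma>' s i) has_real_derivative \<gamma>'' t i) (at t within {a..b})"
      and unit: "\<forall>t\<in>{a..b}. mink n (\<gamma>' t) (\<gamma>' t) = 1"
      and curv: "\<forall>t\<in>{a..b}. geod_curv n \<gamma> \<gamma>'' t \<le> K"
    for n K a b \<gamma> \<gamma>' \<gamma>''
  proof (cases "a = b")
    case True
    have hx: "hdist n (\<gamma> a) (\<gamma> a) = 0"
      using hyp True unfolding hdist_def hyp_pt_def by simp
    have Q: "quasi_geodesic (hdist n) (1 / sqrt (1 - K\<^sup>2)) {a..b} \<gamma>"
      unfolding quasi_geodesic_def using True hx by auto
    have Hs: "hausdorff_dist_wrt (hdist n) (\<gamma> ` {a..b}) (g ` {0..hdist n (\<gamma> a) (\<gamma> b)}) \<le> f K"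
      if "hyp_geodesic_segment n (\<gamma> a) (\<gamma> b) g" for g
    proof -
      have "g 0 = \<gamma> a" using that unfolding hyp_geodesic_segment_def by simp
      thus ?thesis unfolding hausdorff_dist_wrt_def using True hx fnn[of K] by simp
    qed
    show ?thesis using Q Hs by blast
  next
    case False
    hence ab': "a < b" using ab by simp
    interpret curve n K a b \<gamma> \<gamma>' \<gamma>''
      using K0 K1 ab' hyp d1 d2 unit curv by unfold_locales auto
    have Q: "quasi_geodesic (hdist n) (1 / sqrt (1 - K\<^sup>2)) {a..b} \<gamma>"
      unfolding quasi_geodesic_def
    proof (intro ballI conjI)
      fix s t assume s: "s \<in> {a..b}" and t: "t \<in> {a..b}"
      have c1: "1 / (1 / sqrt (1 - K\<^sup>2)) = sqrt (1 - K\<^sup>2)" by simp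
      show "1 / (1 / sqrt (1 - K\<^sup>2)) * \<bar>s - t\<bar> \<le> hdist n (\<gamma> s) (\<gamma> t)"
        unfolding c1
      proof (cases "s \<le> t")
        case True thus "sqrt (1 - K\<^sup>2) * \<bar>s - t\<bar> \<le> hdist n (\<gamma> s) (\<gamma> t)"
          using quasi_lower[OF s t True] by simp
      next
        case False thus "sqrt (1 - K\<^sup>2) * \<bar>s - t\<bar> \<le> hdist n (\<gamma> s) (\<gamma> t)"
          using quasi_lower[OF t s] hdist_sym[of n "\<gamma> s" "\<gamma> t"] by simp
      qed
      have up: "hdist n (\<gamma> s) (\<gamma> t) \<le> \<bar>s - t\<bar>"
      proof (cases "s \<le> t")
        case True thus ?thesis using quasi_upper[OF s t True] by simp
      next
        case False thus ?thesis using quasi_upper[OF t s] hdist_sym[of n "\<gamma> s" "\<gamma> t"] by simp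
      qed
      have "1 \<le> 1 / sqrt (1 - K\<^sup>2)" using c_pos c_le1 by simp
      hence "\<bar>s - t\<bar> \<le> 1 / sqrt (1 - K\<^sup>2) * \<bar>s - t\<bar>"
        using mult_right_mono[of 1 "1 / sqrt (1 - K\<^sup>2)" "\<bar>s - t\<bar>"] by simp
      thus "hdist n (\<gamma> s) (\<gamma> t) \<le> 1 / sqrt (1 - K\<^sup>2) * \<bar>s - t\<bar>" using up by linarith
    qed
    have Hs: "hausdorff_dist_wrt (hdist n) (\<gamma> ` {a..b}) (g ` {0..hdist n (\<gamma> a) (\<gamma> b)}) \<le> f K"
      if seg: "hyp_geodesic_segment n (\<gamma> a) (\<gamma> b) g" for g
    proof -
      interpret curve_seg n K a b \<gamma> \<gamma>' \<gamma>'' g by unfold_locales (rule seg)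
      have "fK = f K" unfolding fK_def \<rho>_def f_def ..
      thus ?thesis using hausdorff unfolding len_def by simp
    qed
    show ?thesis using Q Hs by blast
  qed
  show ?thesis
    by (rule exI[of _ f]) (use cont fnn f0 main in blast)
qed


end
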